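(* (Destructor to consumer case.) Let $P$ be a FOOD program with global context $\Delta$, translated by $\Delta;\Gamma\vdash P\Rightarrow T_0\leadsto P'$, with $P'$ having global context $\Delta'$ (components written with a prime). If $C\in\textsc{Gen}(D)$, $f\in\textsc{Dtr}(D)$, $\textsc{dtrBody}(f,C)=(\overline y,\overline x,e)$ and $\Delta;\Gamma\vdash e\Rightarrow T\leadsto e'$, then $C\in\textsc{Ctr}'(D)$, $f\in\textsc{Csm}'(D)$ and $\textsc{csmBody}'(f,C)=(\overline y,\overline x,[\texttt{this}\mapsto\texttt{self}]e')$.
   Context: FOOD programs consist of definitions followed by an expression. Definitions: datatypes $\texttt{data}\ D$; interfaces $\texttt{interface}\ D\{\overline{Dtr}\}$ with destructors (declarations $\texttt{def}\ f(\overline{x:T}):T$ or functions $\texttt{def}\ f(\overline{x:T}):T=e$ giving a default body); constructors $\texttt{case}\ C(\overline{x:T})\ \texttt{extends}\ D$; generators $\texttt{class}\ C(\overline{x:T})\ \texttt{implements}\ D\{\overline{Fun}\}$; consumers $\texttt{def}\ f(\texttt{self}:D)(\overline{x:T}):T=\overline{\texttt{case}\ P\Rightarrow e}$ with patterns $C(\overline x)$ or $\_$. Global context: $\textsc{Ctr}(D)$, $\textsc{Gen}(D)$, $\textsc{Dtr}(D)$, $\textsc{Csm}(D)$ the constructors, generators, destructors and consumers of $D$. Lookups: $\textsc{dtrBody}(f,C)=(\overline y,\overline x,e)$ if $\texttt{class}\ C(\overline{y:T})\ \texttt{implements}\ D$ contains $\texttt{def}\ f(\overline{x:T}):T=e$,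 and $(\varnothing,\overline x,e)$ if instead interface $D$ contains $\texttt{def}\ f(\overline{x:T}):T=e$; $\textsc{csmBody}(f,C)=(\overline y,\overline x,e)$ if consumer $f$ has clause $\texttt{case}\ C(\overline y)\Rightarrow e$, and $(\varnothing,\overline x,e)$ if it has clause $\texttt{case}\ \_\Rightarrow e$. $[a\mapsto b]e$ is substitution. The translation $\Delta;\Gamma\vdash\cdot\Rightarrow T\leadsto\cdot$ maps each transformed interface $D$ to $\texttt{data}\ D$ with, for each destructor $\texttt{def}\ f(\overline{x:T}):T[=e_0]$, a consumer $\texttt{def}\ f(\texttt{self}:D)(\overline{x:T}):T$ whose clauses are $\texttt{case}\ C(\overline y)\Rightarrow[\texttt{this}\mapsto\texttt{self}]e'$ for each generator $C(\overline{y:S})$ of $D$ containing $\texttt{def}\ f(\overline{x:T}):T=e$ where $\Gamma,\overline{y:S},\overline{x:T}\vdash e\Rightarrow T\leadsto e'$ (rule Fun2Case), plus, when the default $e_0$ exists, $\texttt{case}\ \_\Rightarrow[\texttt{this}\mapsto\texttt{self}]e_0'$ with $\Gamma,\overline{x:T}\vdash e_0\Rightarrow T\leadsto e_0'$ (rule Fun2Csm); generators of $D$ become constructors $\texttt{case}\ C(\overline{x:T})\ \texttt{extends}\ D$. Expressions are translated type-directedly: destructor selections $e_1.f(\overline{e_2})$ on transformed interfaces become consumer applications $f(e_1')(\overline{e_2'})$, consumer applications on transformed datatypes become selections, $\texttt{new}\ C(\overline e)$ becomes $C(\overline{e'})$ for generators of transformed interfaces and $C(\overline e)$ becomes $\texttt{new}\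 C(\overline{e'})$ for constructors of transformed datatypes; other forms translate subexpressions only. *)

theory Defs
  imports Main
begin

type_synonym name = string
type_synonym var = string
type_synonym ty = string     \<comment> \<open>types are type names D\<close>

datatype exp =
    Var var                       \<comment> \<open>variable (including this / self)\<close>
  | Sel exp name "exp list"       \<comment> \<open>destructor selection  e.f(es)\<close>
  | App name exp "exp list"       \<comment> \<open>consumer application  f(e)(es)\<close>
  | New name "exp list"           \<comment> \<open>new C(es)\<close>
  | Con name "exp list"           \<comment> \<open>constructor call C(es)\<close>

definition thisv :: var where "thisv = ''this''"
definition selfv :: var where "selfv = ''self''"

datatype dtr =
    DtrDecl name "(var \<times> ty) list" ty        \<comment> \<open>def f(xs:T):T\<close>
  | DtrDef name "(var \<times> ty) list" ty exp    \<comment> \<open>def f(xs:T):T = e (default body)\<close>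

type_synonym fundef = "name \<times> (var \<times> ty) list \<times> ty \<times> exp"  \<comment> \<open>def f(xs:T):T = e\<close>

datatype pat = PCon name "var list" | PWild

datatype def =
    DData name                                                   \<comment> \<open>data D\<close>
  | DIface name "dtr list"                                       \<comment> \<open>interface D {Dtr}\<close>
  | DCtor name "(var \<times> ty) list" name                           \<comment> \<open>case C(xs:T) extends D\<close>
  | DGen name "(var \<times> ty) list" name "fundef list"              \<comment> \<open>class C(xs:T) implements D {Fun}\<close>
  | DCsm name name "(var \<times> ty) list" ty "(pat \<times> exp) list"     \<comment> \<open>def f(self:D)(xs:T):T = cases\<close>

type_synonym prog = "def list \<times> exp"
type_synonym gctx = "def list"
type_synonym ctx = "var \<Rightarrow> ty option"

fun dtr_name :: "dtr \<Rightarrow> name" where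
  "dtr_name (DtrDecl f _ _) = f" | "dtr_name (DtrDef f _ _ _) = f"
fun dtr_params :: "dtr \<Rightarrow> (var \<times> ty) list" where
  "dtr_params (DtrDecl _ xs _) = xs" | "dtr_params (DtrDef _ xs _ _) = xs"
fun dtr_ret :: "dtr \<Rightarrow> ty" where
  "dtr_ret (DtrDecl _ _ T) = T" | "dtr_ret (DtrDef _ _ T _) = T"

definition defs :: "prog \<Rightarrow> gctx" where "defs P = fst P"

definition Ctr :: "gctx \<Rightarrow> name \<Rightarrow> name set" where
  "Ctr \<Delta> D = {C. \<exists>ps. DCtor C ps D \<in> set \<Delta>}"
definition Gen :: "gctx \<Rightarrow> name \<Rightarrow> name set" where
  "Gen \<Delta> D = {C. \<exists>ps fs. DGen C ps D fs \<in> set \<Delta>}"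
definition Dtr :: "gctx \<Rightarrow> name \<Rightarrow> name set" where
  "Dtr \<Delta> D = {f. \<exists>dtrs. DIface D dtrs \<in> set \<Delta> \<and> f \<in> dtr_name ` set dtrs}"
definition Csm :: "gctx \<Rightarrow> name \<Rightarrow> name set" where
  "Csm \<Delta> D = {f. \<exists>xs T cls. DCsm f D xs T cls \<in> set \<Delta>}"

fun gen_info :: "name \<Rightarrow> def \<Rightarrow> ((var \<times> ty) list \<times> name \<times> fundef list) list" where
  "gen_info C (DGen C' ps D fs) = (if C' = C then [(ps, D, fs)] else [])"
| "gen_info C _ = []"

fun iface_info :: "name \<Rightarrow> def \<Rightarrow> dtr list list" where
  "iface_info D (DIface D' dtrs) = (if D' = D then [dtrs] else [])"
| "iface_info D _ = []"

fun csm_info :: "name \<Rightarrow> def \<Rightarrow> (name \<times> (var \<times> ty) list \<times> ty \<times> (pat \<times> exp) list) list" where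
  "csm_info f (DCsm f' D xs T cls) = (if f' = f then [(D, xs, T, cls)] else [])"
| "csm_info f _ = []"

definition find_gen :: "gctx \<Rightarrow> name \<Rightarrow> ((var \<times> ty) list \<times> name \<times> fundef list) option" where
  "find_gen \<Delta> C = (case concat (map (gen_info C) \<Delta>) of [] \<Rightarrow> None | x # _ \<Rightarrow> Some x)"
definition find_iface :: "gctx \<Rightarrow> name \<Rightarrow> dtr list option" where
  "find_iface \<Delta> D = (case concat (map (iface_info D) \<Delta>) of [] \<Rightarrow> None | x # _ \<Rightarrow> Some x)"
definition find_csm :: "gctx \<Rightarrow> name \<Rightarrow> (name \<times> (var \<times> ty) list \<times> ty \<times> (pat \<times> exp) list) option" where
  "find_csm \<Delta> f = (case concat (map (csm_info f) \<Delta>) of [] \<Rightarrow> None | x # _ \<Rightarrow> Some x)"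

definition find_fun :: "name \<Rightarrow> fundef list \<Rightarrow> fundef option" where
  "find_fun f fs = find (\<lambda>(g, _, _, _). g = f) fs"

fun is_pcon :: "name \<Rightarrow> pat \<Rightarrow> bool" where
  "is_pcon C (PCon C' _) = (C' = C)" | "is_pcon C PWild = False"

definition find_con_clause :: "name \<Rightarrow> (pat \<times> exp) list \<Rightarrow> (pat \<times> exp) option" where
  "find_con_clause C cls = find (\<lambda>(p, _). is_pcon C p) cls"
definition find_wild_clause :: "(pat \<times> exp) list \<Rightarrow> (pat \<times> exp) option" where
  "find_wild_clause cls = find (\<lambda>(p, _). p = PWild) cls"

definition dtrBody :: "gctx \<Rightarrow> name \<Rightarrow> name \<Rightarrow> (var list \<times> var list \<times> exp) option" where
  "dtrBody \<Delta> f C =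
    (case find_gen \<Delta> C of
       None \<Rightarrow> None
     | Some (ps, D, fs) \<Rightarrow>
         (case find_fun f fs of
            Some (_, xs, _, e) \<Rightarrow> Some (map fst ps, map fst xs, e)
          | None \<Rightarrow>
              (case find_iface \<Delta> D of
                 None \<Rightarrow> None
               | Some dtrs \<Rightarrow>
                   (case find (\<lambda>d. dtr_name d = f) dtrs of
                      Some (DtrDef _ xs _ e) \<Rightarrow> Some ([], map fst xs, e)
                    | _ \<Rightarrow> None))))"

definition csmBody :: "gctx \<Rightarrow> name \<Rightarrow> name \<Rightarrow> (var list \<times> var list \<times> exp) option" where
  "csmBody \<Delta> f C =
    (case find_csm \<Delta> f of
       None \<Rightarrow> None
     | Some (D, xs, T, cls) \<Rightarrow>
         (case find_con_clause C cls of
            Some (PCon _ ys, e) \<Rightarrow> Some (ys, map fst xs, e)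
          | _ \<Rightarrow>
              (case find_wild_clause cls of
                 Some (_, e) \<Rightarrow> Some ([], map fst xs, e)
               | None \<Rightarrow> None)))"

fun ren :: "(var \<Rightarrow> var) \<Rightarrow> exp \<Rightarrow> exp" where
  "ren \<rho> (Var x) = Var (\<rho> x)"
| "ren \<rho> (Sel e f es) = Sel (ren \<rho> e) f (map (ren \<rho>) es)"
| "ren \<rho> (App f e es) = App f (ren \<rho> e) (map (ren \<rho>) es)"
| "ren \<rho> (New C es) = New C (map (ren \<rho>) es)"
| "ren \<rho> (Con C es) = Con C (map (ren \<rho>) es)"

definition subst_var :: "var \<Rightarrow> var \<Rightarrow> exp \<Rightarrow> exp" where
  "subst_var a b e = ren (\<lambda>v. if v = a then b else v) e"

definition ext :: "ctx \<Rightarrow> (var \<times> ty) list \<Rightarrow> ctx" where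
  "ext \<Gamma> xs = \<Gamma>(map fst xs [\<mapsto>] map snd xs)"

section \<open>Type-directed translation of expressions (parameterised by the set tr of transformed types)\<close>

inductive texp :: "name set \<Rightarrow> gctx \<Rightarrow> ctx \<Rightarrow> exp \<Rightarrow> ty \<Rightarrow> exp \<Rightarrow> bool" where
  T_Var: "\<Gamma> x = Some T \<Longrightarrow> texp tr \<Delta> \<Gamma> (Var x) T (Var x)"
| T_Sel: "\<lbrakk> texp tr \<Delta> \<Gamma> e1 D e1'; DIface D dtrs \<in> set \<Delta>; d \<in> set dtrs; dtr_name d = f;
           length es = length (dtr_params d);
           length es' = length es \<and> (\<forall>i<length es. texp tr \<Delta> \<Gamma> (es ! i) ((map snd (dtr_params d)) ! i) (es' ! i)) \<rbrakk>
          \<Longrightarrow> texp tr \<Delta> \<Gamma> (Sel e1 f es) (dtr_ret d)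
                (if D \<in> tr then App f e1' es' else Sel e1' f es')"
| T_App: "\<lbrakk> DCsm f D xs T cls \<in> set \<Delta>; texp tr \<Delta> \<Gamma> e1 D e1'; length es = length xs;
           length es' = length es \<and> (\<forall>i<length es. texp tr \<Delta> \<Gamma> (es ! i) ((map snd xs) ! i) (es' ! i)) \<rbrakk>
          \<Longrightarrow> texp tr \<Delta> \<Gamma> (App f e1 es) T
                (if D \<in> tr then Sel e1' f es' else App f e1' es')"
| T_New: "\<lbrakk> DGen C ps D fs \<in> set \<Delta>; length es = length ps;
           length es' = length es \<and> (\<forall>i<length es. texp tr \<Delta> \<Gamma> (es ! i) ((map snd ps) ! i) (es' ! i)) \<rbrakk>
          \<Longrightarrow> texp tr \<Delta> \<Gamma> (New C es) D (if D \<in> tr then Con C es' else New C es')"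
| T_Con: "\<lbrakk> DCtor C ps D \<in> set \<Delta>; length es = length ps;
           length es' = length es \<and> (\<forall>i<length es. texp tr \<Delta> \<Gamma> (es ! i) ((map snd ps) ! i) (es' ! i)) \<rbrakk>
          \<Longrightarrow> texp tr \<Delta> \<Gamma> (Con C es) D (if D \<in> tr then New C es' else Con C es')"

fun def_names :: "def \<Rightarrow> name list" where
  "def_names (DData D) = [D]"
| "def_names (DIface D dtrs) = D # map dtr_name dtrs"
| "def_names (DCtor C _ _) = [C]"
| "def_names (DGen C _ _ _) = [C]"
| "def_names (DCsm f _ _ _ _) = [f]"

definition wf_gctx :: "gctx \<Rightarrow> bool" where
  "wf_gctx \<Delta> = distinct (concat (map def_names \<Delta>))"

fun gen_of :: "name \<Rightarrow> def \<Rightarrow> (name \<times> (var \<times> ty) list \<times> fundef list) list" where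
  "gen_of D (DGen C ps D' fs) = (if D' = D then [(C, ps, fs)] else [])"
| "gen_of D _ = []"

fun csm_of :: "name \<Rightarrow> def \<Rightarrow> (name \<times> (var \<times> ty) list \<times> ty \<times> (pat \<times> exp) list) list" where
  "csm_of D (DCsm f D' xs T cls) = (if D' = D then [(f, xs, T, cls)] else [])"
| "csm_of D _ = []"

definition gens_with :: "gctx \<Rightarrow> name \<Rightarrow> name \<Rightarrow> (name \<times> (var \<times> ty) list \<times> fundef) list" where
  "gens_with \<Delta> D f =
     concat (map (\<lambda>(C, ps, fs). case find_fun f fs of None \<Rightarrow> [] | Some fd \<Rightarrow> [(C, ps, fd)])
                 (concat (map (gen_of D) \<Delta>)))"

definition csms_with :: "gctx \<Rightarrow> name \<Rightarrow> name \<Rightarrow> (name \<times> (var \<times> ty) list \<times> ty \<times> var list \<times> exp) list" where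
  "csms_with \<Delta> D C =
     concat (map (\<lambda>(f, xs, T, cls). case find_con_clause C cls of
                     Some (PCon _ ys, e) \<Rightarrow> [(f, xs, T, ys, e)] | _ \<Rightarrow> [])
                 (concat (map (csm_of D) \<Delta>)))"

text \<open>Rule Fun2Case: clause for generator C(ys:S) containing def f(xs:T):T = e\<close>
definition fun2case :: "name set \<Rightarrow> gctx \<Rightarrow> ctx \<Rightarrow> name \<Rightarrow> name \<Rightarrow> (var \<times> ty) list \<Rightarrow> ty
                        \<Rightarrow> name \<times> (var \<times> ty) list \<times> fundef \<Rightarrow> pat \<times> exp \<Rightarrow> bool" where
  "fun2case tr \<Delta> \<Gamma> D f xs T g cl =
     (case g of (C, ps, (_, xs2, T2, e)) \<Rightarrow>
        xs2 = xs \<and> T2 = T \<and>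
        (\<exists>e'. texp tr \<Delta> (ext (ext (\<Gamma>(thisv \<mapsto> D)) ps) xs) e T e' \<and>
              cl = (PCon C (map fst ps), subst_var thisv selfv e')))"

text \<open>destructor of a transformed interface D becomes a consumer (Fun2Case / Fun2Csm)\<close>
definition dtr2csm :: "name set \<Rightarrow> gctx \<Rightarrow> ctx \<Rightarrow> name \<Rightarrow> dtr \<Rightarrow> def \<Rightarrow> bool" where
  "dtr2csm tr \<Delta> \<Gamma> D d c =
     (\<exists>gcls wcl. c = DCsm (dtr_name d) D (dtr_params d) (dtr_ret d) (gcls @ wcl) \<and>
        list_all2 (fun2case tr \<Delta> \<Gamma> D (dtr_name d) (dtr_params d) (dtr_ret d))
                  (gens_with \<Delta> D (dtr_name d)) gcls \<and>
        (case d of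
           DtrDecl _ _ _ \<Rightarrow> wcl = []
         | DtrDef _ xs T e0 \<Rightarrow> (\<exists>e0'. texp tr \<Delta> (ext (\<Gamma>(thisv \<mapsto> D)) xs) e0 T e0' \<and>
                                      wcl = [(PWild, subst_var thisv selfv e0')])))"

definition csm2dtr :: "name set \<Rightarrow> gctx \<Rightarrow> ctx \<Rightarrow> name
                       \<Rightarrow> name \<times> (var \<times> ty) list \<times> ty \<times> (pat \<times> exp) list \<Rightarrow> dtr \<Rightarrow> bool" where
  "csm2dtr tr \<Delta> \<Gamma> D c d =
     (case c of (f, xs, T, cls) \<Rightarrow>
        (case find_wild_clause cls of
           None \<Rightarrow> d = DtrDecl f xs T
         | Some (_, e) \<Rightarrow> (\<exists>e'. texp tr \<Delta> (ext (\<Gamma>(selfv \<mapsto> D)) xs) e T e' \<and>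
                                d = DtrDef f xs T (subst_var selfv thisv e'))))"

definition case2fun :: "name set \<Rightarrow> gctx \<Rightarrow> ctx \<Rightarrow> name \<Rightarrow> (var \<times> ty) list
                        \<Rightarrow> name \<times> (var \<times> ty) list \<times> ty \<times> var list \<times> exp \<Rightarrow> fundef \<Rightarrow> bool" where
  "case2fun tr \<Delta> \<Gamma> D ps c fd =
     (case c of (f, xs, T, ys, e) \<Rightarrow>
        length ys = length ps \<and>
        (\<exists>e'. texp tr \<Delta> (ext (ext (\<Gamma>(selfv \<mapsto> D)) (zip ys (map snd ps))) xs) e T e' \<and>
              fd = (f, xs, T, ren (\<lambda>v. if v = selfv then thisv
                                       else (case map_of (zip ys (map fst ps)) v of
                                               Some y \<Rightarrow> y | None \<Rightarrow> v)) e')))"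

definition tr_dtr :: "name set \<Rightarrow> gctx \<Rightarrow> ctx \<Rightarrow> name \<Rightarrow> dtr \<Rightarrow> dtr \<Rightarrow> bool" where
  "tr_dtr tr \<Delta> \<Gamma> D d d' =
     (case d of
        DtrDecl f xs T \<Rightarrow> d' = DtrDecl f xs T
      | DtrDef f xs T e \<Rightarrow> (\<exists>e'. texp tr \<Delta> (ext (\<Gamma>(thisv \<mapsto> D)) xs) e T e' \<and> d' = DtrDef f xs T e'))"

definition tr_fun :: "name set \<Rightarrow> gctx \<Rightarrow> ctx \<Rightarrow> name \<Rightarrow> (var \<times> ty) list \<Rightarrow> fundef \<Rightarrow> fundef \<Rightarrow> bool" where
  "tr_fun tr \<Delta> \<Gamma> D ps fd fd' =
     (case fd of (f, xs, T, e) \<Rightarrow>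
        (\<exists>e'. texp tr \<Delta> (ext (ext (\<Gamma>(thisv \<mapsto> D)) ps) xs) e T e' \<and> fd' = (f, xs, T, e')))"

definition tr_clause :: "name set \<Rightarrow> gctx \<Rightarrow> ctx \<Rightarrow> name \<Rightarrow> (var \<times> ty) list \<Rightarrow> ty
                         \<Rightarrow> pat \<times> exp \<Rightarrow> pat \<times> exp \<Rightarrow> bool" where
  "tr_clause tr \<Delta> \<Gamma> D xs T cl cl' =
     (case cl of
        (PWild, e) \<Rightarrow> (\<exists>e'. texp tr \<Delta> (ext (\<Gamma>(selfv \<mapsto> D)) xs) e T e' \<and> cl' = (PWild, e'))
      | (PCon C ys, e) \<Rightarrow>
          (\<exists>ps e'. DCtor C ps D \<in> set \<Delta> \<and> length ys = length ps \<and>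
                  texp tr \<Delta> (ext (ext (\<Gamma>(selfv \<mapsto> D)) (zip ys (map snd ps))) xs) e T e' \<and>
                  cl' = (PCon C ys, e')))"

fun tdef :: "name set \<Rightarrow> gctx \<Rightarrow> ctx \<Rightarrow> def \<Rightarrow> def list \<Rightarrow> bool" where
  "tdef tr \<Delta> \<Gamma> (DData D) ds =
     (if D \<in> tr then (\<exists>dtrs. ds = [DIface D dtrs] \<and>
                             list_all2 (csm2dtr tr \<Delta> \<Gamma> D) (concat (map (csm_of D) \<Delta>)) dtrs)
      else ds = [DData D])"
| "tdef tr \<Delta> \<Gamma> (DIface D dtrs) ds =
     (if D \<in> tr then (\<exists>csms. ds = DData D # csms \<and> list_all2 (dtr2csm tr \<Delta> \<Gamma> D) dtrs csms)
      else (\<exists>dtrs'. ds = [DIface D dtrs'] \<and> list_all2 (tr_dtr tr \<Delta> \<Gamma> D) dtrs dtrs'))"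
| "tdef tr \<Delta> \<Gamma> (DCtor C ps D) ds =
     (if D \<in> tr then (\<exists>fs. ds = [DGen C ps D fs] \<and>
                             list_all2 (case2fun tr \<Delta> \<Gamma> D ps) (csms_with \<Delta> D C) fs)
      else ds = [DCtor C ps D])"
| "tdef tr \<Delta> \<Gamma> (DGen C ps D fs) ds =
     (if D \<in> tr then ds = [DCtor C ps D]
      else (\<exists>fs'. ds = [DGen C ps D fs'] \<and> list_all2 (tr_fun tr \<Delta> \<Gamma> D ps) fs fs'))"
| "tdef tr \<Delta> \<Gamma> (DCsm f D xs T cls) ds =
     (if D \<in> tr then ds = []
      else (\<exists>cls'. ds = [DCsm f D xs T cls'] \<and> list_all2 (tr_clause tr \<Delta> \<Gamma> D xs T) cls cls'))"

text \<open>Program translation  \<Delta>;\<Gamma> \<turnstile> P \<Rightarrow> T0 \<leadsto> P'  (with transformed types tr)\<close>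
definition tprog :: "name set \<Rightarrow> ctx \<Rightarrow> prog \<Rightarrow> ty \<Rightarrow> prog \<Rightarrow> bool" where
  "tprog tr \<Gamma> P T0 P' =
     (wf_gctx (defs P) \<and>
      (\<exists>dss. list_all2 (tdef tr (defs P) \<Gamma>) (defs P) dss \<and> defs P' = concat dss) \<and>
      texp tr (defs P) \<Gamma> (snd P) T0 (snd P'))"

end

theory Submission
  imports Defs
begin

lemma distinct_concat_idx:
  "distinct (concat (map g xs)) \<Longrightarrow> i < length xs \<Longrightarrow> j < length xs \<Longrightarrow>
   n \<in> set (g (xs!i)) \<Longrightarrow> n \<in> set (g (xs!j)) \<Longrightarrow> i = j"
proof (induction xs arbitrary: i j)
  case Nil then show ?case by simp
next
  case (Cons x xs)
  have d: "distinct (g x)" "distinct (concat (map g xs))" "set (g x) \<inter> set (concat (map g xs)) = {}"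
    using Cons.prems(1) by auto
  have mem: "\<And>k. k < length xs \<Longrightarrow> set (g (xs!k)) \<subseteq> set (concat (map g xs))"
    using nth_mem by fastforce
  show ?case
  proof (cases i)
    case 0
    show ?thesis
    proof (cases j)
      case (Suc j')
      have "n \<in> set (g x)" using Cons.prems(4) 0 by simp
      moreover have "n \<in> set (concat (map g xs))"
        using Cons.prems(3,5) Suc mem[of j'] by auto
      ultimately show ?thesis using d(3) by blast
    qed (simp add: 0)
  next
    case (Suc i')
    show ?thesis
    proof (cases j)
      case 0
      have "n \<in> set (g x)" using Cons.prems(5) 0 by simp
      moreover have "n \<in> set (concat (map g xs))"
        using Cons.prems(2,4) Suc mem[of i'] by auto
      ultimately show ?thesis using d(3) by blast
    next
      case (Suc j')
      then show ?thesis using Cons.IH[OF d(2), of i' j'] Cons.prems \<open>i = Suc i'\<close> by simp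
    qed
  qed
qed

lemma wf_idx:
  "wf_gctx \<Delta> \<Longrightarrow> i < length \<Delta> \<Longrightarrow> j < length \<Delta> \<Longrightarrow>
   n \<in> set (def_names (\<Delta>!i)) \<Longrightarrow> n \<in> set (def_names (\<Delta>!j)) \<Longrightarrow> i = j"
  unfolding wf_gctx_def by (rule distinct_concat_idx)

lemma wf_uniq:
  assumes "wf_gctx \<Delta>" "a \<in> set \<Delta>" "b \<in> set \<Delta>" "n \<in> set (def_names a)" "n \<in> set (def_names b)"
  shows "a = b"
proof -
  obtain i j where "i < length \<Delta>" "\<Delta>!i = a" "j < length \<Delta>" "\<Delta>!j = b"
    using assms by (auto simp: in_set_conv_nth)
  then show ?thesis using wf_idx[OF assms(1)] assms by metis
qed

lemma wf_dtrs:
  assumes "wf_gctx \<Delta>" "DIface D dtrs \<in> set \<Delta>"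
  shows "distinct (map dtr_name dtrs)"
proof -
  have "distinct (def_names (DIface D dtrs))"
    using assms unfolding wf_gctx_def by (auto simp: distinct_concat_iff)
  then show ?thesis by simp
qed

lemma dtr_uniq:
  assumes "wf_gctx \<Delta>" "DIface D dtrs \<in> set \<Delta>" "d \<in> set dtrs" "DIface D2 dtrs2 \<in> set \<Delta>"
    "d2 \<in> set dtrs2" "dtr_name d = dtr_name d2"
  shows "D = D2 \<and> dtrs = dtrs2 \<and> d = d2"
proof -
  have "DIface D dtrs = DIface D2 dtrs2"
  proof (rule wf_uniq[OF assms(1,2,4), of "dtr_name d"])
    show "dtr_name d \<in> set (def_names (DIface D dtrs))" using assms(3) by simp
    show "dtr_name d \<in> set (def_names (DIface D2 dtrs2))" using assms(5,6) by simp
  qed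
  then show ?thesis using wf_dtrs[OF assms(1,2)] assms
    by (auto dest: inj_onD[OF distinct_map[THEN iffD1, THEN conjunct2]])
qed

inductive_cases VarE: "texp tr \<Delta> \<Gamma> (Var x) T e'"
inductive_cases SelE: "texp tr \<Delta> \<Gamma> (Sel e f es) T e'"
inductive_cases AppE: "texp tr \<Delta> \<Gamma> (App f e es) T e'"
inductive_cases NewE: "texp tr \<Delta> \<Gamma> (New C es) T e'"
inductive_cases ConE: "texp tr \<Delta> \<Gamma> (Con C es) T e'"

lemma list_eqI2: "length xs = length zs \<Longrightarrow> length ys = length zs \<Longrightarrow>
  (\<And>i. i < length zs \<Longrightarrow> xs!i = ys!i) \<Longrightarrow> xs = ys"
  by (simp add: nth_equalityI)

lemma texp_det:
  assumes "texp tr \<Delta> \<Gamma> e T e1" "wf_gctx \<Delta>"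
  shows "texp tr \<Delta> \<Gamma>2 e T2 e2 \<Longrightarrow> e1 = e2"
  using assms
proof (induction arbitrary: \<Gamma>2 T2 e2 rule: texp.induct)
  case (T_Var \<Gamma> x T tr \<Delta>)
  then show ?case by (auto elim: VarE)
next
  case (T_Sel tr \<Delta> \<Gamma> e1 D e1' dtrs d f es es')
  from T_Sel.prems(1) show ?case
  proof (rule SelE)
    fix D2 e1'' dtrs2 d2 es''
    assume a: "T2 = dtr_ret d2" "e2 = (if D2 \<in> tr then App f e1'' es'' else Sel e1'' f es'')"
      "texp tr \<Delta> \<Gamma>2 e1 D2 e1''" "DIface D2 dtrs2 \<in> set \<Delta>" "d2 \<in> set dtrs2" "dtr_name d2 = f"
      "length es = length (dtr_params d2)" "length es'' = length (dtr_params d2)"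
      "\<forall>i<length (dtr_params d2). texp tr \<Delta> \<Gamma>2 (es ! i) (snd (dtr_params d2 ! i)) (es'' ! i)"
    have "D = D2" using dtr_uniq[OF T_Sel.prems(2) T_Sel.hyps(2,3) a(4,5)] T_Sel.hyps a by auto
    moreover have "e1' = e1''" using T_Sel.IH a T_Sel.prems by blast
    moreover have "es' = es''"
    proof (rule list_eqI2[of _ es])
      have A: "\<forall>i<length es. texp tr \<Delta> \<Gamma>2 (es!i) (snd (dtr_params d2 ! i)) (es''!i)"
        using a(7,8,9) by simp
      have B: "length es' = length es \<and> (\<forall>i<length es. texp tr \<Delta> \<Gamma> (es ! i) (map snd (dtr_params d) ! i) (es' ! i) \<and>
          (\<forall>x xa xb. texp tr \<Delta> x (es ! i) xa xb \<longrightarrow> wf_gctx \<Delta> \<longrightarrow> es' ! i = xb))"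
        using T_Sel.IH by blast
      show "length es' = length es" using B by simp
      show "length es'' = length es" using a(7,8) by simp
      fix i assume "i < length es"
      then show "es' ! i = es'' ! i" using A B T_Sel.prems(2) by blast
    qed
    ultimately show ?thesis using a by simp
  qed
next
  case (T_App f D xs T cls \<Delta> tr \<Gamma> e1 e1' es es')
  from T_App.prems(1) show ?case
  proof (rule AppE)
    fix D2 xs2 cls2 e1'' es''
    assume a: "e2 = (if D2 \<in> tr then Sel e1'' f es'' else App f e1'' es'')"
      "DCsm f D2 xs2 T2 cls2 \<in> set \<Delta>" "texp tr \<Delta> \<Gamma>2 e1 D2 e1''" "length es = length xs2" "length es'' = length xs2"
      "\<forall>i<length xs2. texp tr \<Delta> \<Gamma>2 (es ! i) (snd (xs2 ! i)) (es'' ! i)"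
    have "D = D2" using wf_uniq[OF T_App.prems(2) T_App.hyps(1) a(2), of f] by simp
    moreover have "e1' = e1''" using T_App.IH a T_App.prems by blast
    moreover have "es' = es''"
    proof (rule list_eqI2[of _ es])
      have A: "\<forall>i<length es. texp tr \<Delta> \<Gamma>2 (es!i) (snd (xs2 ! i)) (es''!i)"
        using a(4,5,6) by simp
      have B: "length es' = length es \<and> (\<forall>i<length es. texp tr \<Delta> \<Gamma> (es ! i) (map snd xs ! i) (es' ! i) \<and>
          (\<forall>x xa xb. texp tr \<Delta> x (es ! i) xa xb \<longrightarrow> wf_gctx \<Delta> \<longrightarrow> es' ! i = xb))"
        using T_App.IH by blast
      show "length es' = length es" using B by simp
      show "length es'' = length es" using a(4,5) by simp
      fix i assume "i < length es"
      then show "es' ! i = es'' ! i" using A B T_App.prems(2) by blast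
    qed
    ultimately show ?thesis using a by simp
  qed
next
  case (T_New C ps D fs \<Delta> es es' tr \<Gamma>)
  from T_New.prems(1) show ?case
  proof (rule NewE)
    fix ps2 fs2 es''
    assume a: "e2 = (if T2 \<in> tr then Con C es'' else New C es'')"
      "DGen C ps2 T2 fs2 \<in> set \<Delta>" "length es = length ps2" "length es'' = length ps2"
      "\<forall>i<length ps2. texp tr \<Delta> \<Gamma>2 (es ! i) (snd (ps2 ! i)) (es'' ! i)"
    have "D = T2" using wf_uniq[OF T_New.prems(2) T_New.hyps(1) a(2), of C] by simp
    moreover have "es' = es''"
    proof (rule list_eqI2[of _ es])
      have A: "\<forall>i<length es. texp tr \<Delta> \<Gamma>2 (es!i) (snd (ps2 ! i)) (es''!i)"
        using a(3,4,5) by simp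
      have B: "length es' = length es \<and> (\<forall>i<length es. texp tr \<Delta> \<Gamma> (es ! i) (map snd ps ! i) (es' ! i) \<and>
          (\<forall>x xa xb. texp tr \<Delta> x (es ! i) xa xb \<longrightarrow> wf_gctx \<Delta> \<longrightarrow> es' ! i = xb))"
        using T_New.IH by blast
      show "length es' = length es" using B by simp
      show "length es'' = length es" using a(3,4) by simp
      fix i assume "i < length es"
      then show "es' ! i = es'' ! i" using A B T_New.prems(2) by blast
    qed
    ultimately show ?thesis using a by simp
  qed
next
  case (T_Con C ps D \<Delta> es es' tr \<Gamma>)
  from T_Con.prems(1) show ?case
  proof (rule ConE)
    fix ps2 es''
    assume a: "e2 = (if T2 \<in> tr then New C es'' else Con C es'')"
      "DCtor C ps2 T2 \<in> set \<Delta>" "length es = length ps2" "length es'' = length ps2"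
      "\<forall>i<length ps2. texp tr \<Delta> \<Gamma>2 (es ! i) (snd (ps2 ! i)) (es'' ! i)"
    have "D = T2" using wf_uniq[OF T_Con.prems(2) T_Con.hyps(1) a(2), of C] by simp
    moreover have "es' = es''"
    proof (rule list_eqI2[of _ es])
      have A: "\<forall>i<length es. texp tr \<Delta> \<Gamma>2 (es!i) (snd (ps2 ! i)) (es''!i)"
        using a(3,4,5) by simp
      have B: "length es' = length es \<and> (\<forall>i<length es. texp tr \<Delta> \<Gamma> (es ! i) (map snd ps ! i) (es' ! i) \<and>
          (\<forall>x xa xb. texp tr \<Delta> x (es ! i) xa xb \<longrightarrow> wf_gctx \<Delta> \<longrightarrow> es' ! i = xb))"
        using T_Con.IH by blast
      show "length es' = length es" using B by simp
      show "length es'' = length es" using a(3,4) by simp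
      fix i assume "i < length es"
      then show "es' ! i = es'' ! i" using A B T_Con.prems(2) by blast
    qed
    ultimately show ?thesis using a by simp
  qed
qed


lemma find_head: "(\<forall>x\<in>set L. x = v) \<Longrightarrow> v \<in> set L \<Longrightarrow> (case L of [] \<Rightarrow> None | x#_ \<Rightarrow> Some x) = Some v"
  by (cases L) auto

lemma find_head_D: "(case L of [] \<Rightarrow> None | x#_ \<Rightarrow> Some x) = Some v \<Longrightarrow> v \<in> set L"
  by (cases L) auto

lemma gen_info_set: "x \<in> set (gen_info C a) \<longleftrightarrow> (\<exists>ps D fs. a = DGen C ps D fs \<and> x = (ps,D,fs))"
  by (cases a) auto
lemma iface_info_set: "x \<in> set (iface_info D a) \<longleftrightarrow> a = DIface D x"
  by (cases a) auto
lemma csm_info_set: "x \<in> set (csm_info f a) \<longleftrightarrow> (\<exists>D xs T cls. a = DCsm f D xs T cls \<and> x = (D,xs,T,cls))"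
  by (cases a) auto
lemma gen_of_set: "x \<in> set (gen_of D a) \<longleftrightarrow> (\<exists>C ps fs. a = DGen C ps D fs \<and> x = (C,ps,fs))"
  by (cases a) auto

lemma find_gen_I:
  assumes "wf_gctx \<Delta>" "DGen C ps D fs \<in> set \<Delta>"
  shows "find_gen \<Delta> C = Some (ps,D,fs)"
  unfolding find_gen_def
proof (rule find_head)
  show "(ps, D, fs) \<in> set (concat (map (gen_info C) \<Delta>))"
  proof -
    have "(ps,D,fs) \<in> set (gen_info C (DGen C ps D fs))" by simp
    then show ?thesis using assms(2) by (auto simp del: gen_info.simps)
  qed
  show "\<forall>x\<in>set (concat (map (gen_info C) \<Delta>)). x = (ps, D, fs)"
  proof
    fix x assume "x \<in> set (concat (map (gen_info C) \<Delta>))"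
    then obtain a where "a \<in> set \<Delta>" "x \<in> set (gen_info C a)" by auto
    then obtain ps' D' fs' where "DGen C ps' D' fs' \<in> set \<Delta>" "x = (ps',D',fs')"
      unfolding gen_info_set by blast
    moreover have "DGen C ps' D' fs' = DGen C ps D fs"
      using wf_uniq[OF assms(1) calculation(1) assms(2), of C] by simp
    ultimately show "x = (ps, D, fs)" by simp
  qed
qed

lemma find_gen_D: "find_gen \<Delta> C = Some (ps,D,fs) \<Longrightarrow> DGen C ps D fs \<in> set \<Delta>"
  unfolding find_gen_def by (drule find_head_D) (auto simp del: gen_info.simps simp: gen_info_set)

lemma find_iface_D: "find_iface \<Delta> D = Some dtrs \<Longrightarrow> DIface D dtrs \<in> set \<Delta>"
  unfolding find_iface_def by (drule find_head_D) (auto simp del: iface_info.simps simp: iface_info_set)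

lemma find_csm_I:
  assumes "DCsm f D xs T cls \<in> set \<Delta>"
    "\<And>D' xs' T' cls'. DCsm f D' xs' T' cls' \<in> set \<Delta> \<Longrightarrow> D' = D \<and> xs' = xs \<and> T' = T \<and> cls' = cls"
  shows "find_csm \<Delta> f = Some (D,xs,T,cls)"
  unfolding find_csm_def
proof (rule find_head)
  show "(D,xs,T,cls) \<in> set (concat (map (csm_info f) \<Delta>))"
  proof -
    have "(D,xs,T,cls) \<in> set (csm_info f (DCsm f D xs T cls))" by simp
    then show ?thesis using assms(1) by (auto simp del: csm_info.simps)
  qed
  show "\<forall>x\<in>set (concat (map (csm_info f) \<Delta>)). x = (D,xs,T,cls)"
  proof
    fix x assume "x \<in> set (concat (map (csm_info f) \<Delta>))"
    then obtain a where "a \<in> set \<Delta>" "x \<in> set (csm_info f a)" by auto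
    then obtain D' xs' T' cls' where "DCsm f D' xs' T' cls' \<in> set \<Delta>" "x = (D',xs',T',cls')"
      unfolding csm_info_set by blast
    then show "x = (D,xs,T,cls)" using assms(2) by blast
  qed
qed

lemma find_I: "(\<forall>x\<in>set xs. P x \<longrightarrow> x = v) \<Longrightarrow> v \<in> set xs \<Longrightarrow> P v \<Longrightarrow> find P xs = Some v"
proof (induction xs)
  case Nil then show ?case by simp
next
  case (Cons a xs)
  show ?case
  proof (cases "P a")
    case True
    then have "a = v" using Cons.prems(1) by simp
    then show ?thesis using True by simp
  next
    case False
    then have "v \<noteq> a" using Cons.prems(3) by metis
    then have "v \<in> set xs" using Cons.prems(2) by simp
    moreover have "\<forall>x\<in>set xs. P x \<longrightarrow> x = v" using Cons.prems(1) by simp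
    ultimately have "find P xs = Some v" using Cons.IH Cons.prems(3) by blast
    then show ?thesis using False by simp
  qed
qed

lemma find_append_skip: "(\<forall>x\<in>set xs. \<not> P x) \<Longrightarrow> find P (xs @ ys) = find P ys"
  by (induction xs) simp_all

lemma gens_with_set:
  "x \<in> set (gens_with \<Delta> D f) \<longleftrightarrow>
   (\<exists>C ps fs fd. x = (C,ps,fd) \<and> DGen C ps D fs \<in> set \<Delta> \<and> find_fun f fs = Some fd)"
  unfolding gens_with_def by (force simp: gen_of_set split: option.splits)


lemma find_csm_D: "find_csm \<Delta> f = Some (D,xs,T,cls) \<Longrightarrow> DCsm f D xs T cls \<in> set \<Delta>"
  unfolding find_csm_def by (drule find_head_D) (auto simp del: csm_info.simps simp: csm_info_set)


lemma csm_of_dtr: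
  assumes wf: "wf_gctx \<Delta>" and LA: "list_all2 (tdef tr \<Delta> \<Gamma>) \<Delta> dss" and tr: "D \<in> tr"
    and ifc: "DIface D dtrs \<in> set \<Delta>" and dm: "d \<in> set dtrs" and dn: "dtr_name d = f"
  shows "\<exists>gcls wcl. find_csm (concat dss) f = Some (D, dtr_params d, dtr_ret d, gcls @ wcl) \<and>
     list_all2 (fun2case tr \<Delta> \<Gamma> D f (dtr_params d) (dtr_ret d)) (gens_with \<Delta> D f) gcls \<and>
     (case d of DtrDecl _ _ _ \<Rightarrow> wcl = []
      | DtrDef _ xs T e0 \<Rightarrow> (\<exists>e0'. texp tr \<Delta> (ext (\<Gamma>(thisv \<mapsto> D)) xs) e0 T e0' \<and>
                                    wcl = [(PWild, subst_var thisv selfv e0')]))"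
proof -
  obtain k where k: "k < length \<Delta>" "\<Delta>!k = DIface D dtrs" using ifc by (auto simp: in_set_conv_nth)
  have len: "length dss = length \<Delta>" using LA by (simp add: list_all2_lengthD)
  have "tdef tr \<Delta> \<Gamma> (\<Delta>!k) (dss!k)" using LA k(1) by (simp add: list_all2_nthD)
  then obtain csms where csms: "dss!k = DData D # csms" "list_all2 (dtr2csm tr \<Delta> \<Gamma> D) dtrs csms"
    using k(2) tr by auto
  obtain m where m: "m < length dtrs" "dtrs!m = d" using dm by (auto simp: in_set_conv_nth)
  have "dtr2csm tr \<Delta> \<Gamma> D (dtrs!m) (csms!m)" using csms(2) m(1) by (simp add: list_all2_nthD)
  then obtain gcls wcl where gw: "csms!m = DCsm f D (dtr_params d) (dtr_ret d) (gcls @ wcl)"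
     "list_all2 (fun2case tr \<Delta> \<Gamma> D f (dtr_params d) (dtr_ret d)) (gens_with \<Delta> D f) gcls"
     "(case d of DtrDecl _ _ _ \<Rightarrow> wcl = []
      | DtrDef _ xs T e0 \<Rightarrow> (\<exists>e0'. texp tr \<Delta> (ext (\<Gamma>(thisv \<mapsto> D)) xs) e0 T e0' \<and>
                                    wcl = [(PWild, subst_var thisv selfv e0')]))"
    unfolding dtr2csm_def using m(2) dn by blast
  have inset: "DCsm f D (dtr_params d) (dtr_ret d) (gcls @ wcl) \<in> set (concat dss)"
  proof -
    have "m < length csms" using csms(2) m(1) by (simp add: list_all2_lengthD)
    then have "csms!m \<in> set (dss!k)" using csms(1) by simp
    moreover have "dss!k \<in> set dss" using k(1) len by simp
    ultimately show ?thesis using gw(1) by auto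
  qed
  have fk: "f \<in> set (def_names (\<Delta>!k))" using k(2) dm dn by auto
  have uniq: "D' = D \<and> xs' = dtr_params d \<and> T' = dtr_ret d \<and> cls' = gcls @ wcl"
    if asm: "DCsm f D' xs' T' cls' \<in> set (concat dss)" for D' xs' T' cls'
  proof -
    obtain ds where "ds \<in> set dss" "DCsm f D' xs' T' cls' \<in> set ds" using asm by auto
    then obtain j where j: "j < length dss" "DCsm f D' xs' T' cls' \<in> set (dss!j)"
      by (auto simp: in_set_conv_nth)
    have jl: "j < length \<Delta>" using j len by simp
    have td: "tdef tr \<Delta> \<Gamma> (\<Delta>!j) (dss!j)" using LA jl by (simp add: list_all2_nthD)
    show ?thesis
    proof (cases "\<Delta>!j")
      case (DData D0) then show ?thesis using td j(2) by (auto split: if_splits)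
    next
      case (DIface D0 dtrs0)
      show ?thesis
      proof (cases "D0 \<in> tr")
        case True
        then obtain csms0 where c0: "dss!j = DData D0 # csms0" "list_all2 (dtr2csm tr \<Delta> \<Gamma> D0) dtrs0 csms0"
          using td DIface by auto
        then have "DCsm f D' xs' T' cls' \<in> set csms0" using j(2) by simp
        then obtain m0 where m0: "m0 < length csms0" "csms0!m0 = DCsm f D' xs' T' cls'"
          by (auto simp: in_set_conv_nth)
        have m0l: "m0 < length dtrs0" using c0(2) m0(1) by (simp add: list_all2_lengthD)
        have "dtr2csm tr \<Delta> \<Gamma> D0 (dtrs0!m0) (csms0!m0)" using c0(2) m0l by (simp add: list_all2_nthD)
        then have nm: "dtr_name (dtrs0!m0) = f" using m0(2) unfolding dtr2csm_def by auto
        have "f \<in> set (def_names (\<Delta>!j))" using DIface nm m0l by force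
        then have "j = k" using wf_idx[OF wf jl k(1)] fk by blast
        then have eqs: "D0 = D" "dtrs0 = dtrs" "csms0 = csms" using DIface k(2) c0(1) csms(1) by auto
        have dis: "distinct (map dtr_name dtrs)" by (rule wf_dtrs[OF wf ifc])
        have "map dtr_name dtrs ! m0 = map dtr_name dtrs ! m"
          using nm m0l m(1) m(2) dn eqs(2) by simp
        then have "m0 = m" using dis m0l m(1) eqs(2) distinct_conv_nth[of "map dtr_name dtrs"]
          by auto
        then show ?thesis using m0(2) gw(1) eqs by simp
      next
        case False then show ?thesis using td j(2) DIface by auto
      qed
    next
      case DCtor then show ?thesis using td j(2) by (auto split: if_splits)
    next
      case DGen then show ?thesis using td j(2) by (auto split: if_splits)
    next
      case (DCsm g D0 xs0 T0 cls0)
      have "g = f" using td j(2) DCsm by (auto split: if_splits)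
      then have "f \<in> set (def_names (\<Delta>!j))" using DCsm by simp
      then have "j = k" using wf_idx[OF wf jl k(1)] fk by blast
      then show ?thesis using DCsm k(2) by simp
    qed
  qed
  show ?thesis using find_csm_I[OF inset uniq] gw(2,3) by blast
qed


lemma main:
  assumes wf: "wf_gctx \<Delta>" and LA: "list_all2 (tdef tr \<Delta> \<Gamma>) \<Delta> dss" and tr: "D \<in> tr"
    and gen: "C \<in> Gen \<Delta> D" and dt: "f \<in> Dtr \<Delta> D"
    and body: "dtrBody \<Delta> f C = Some (ys, xs, e)" and te: "texp tr \<Delta> \<Gamma> e T e'"
  shows "C \<in> Ctr (concat dss) D \<and> f \<in> Csm (concat dss) D \<and>
         csmBody (concat dss) f C = Some (ys, xs, subst_var thisv selfv e')"
proof -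
  obtain psC fsC where genC: "DGen C psC D fsC \<in> set \<Delta>" using gen unfolding Gen_def by auto
  have fg: "find_gen \<Delta> C = Some (psC, D, fsC)" by (rule find_gen_I[OF wf genC])
  have len: "length dss = length \<Delta>" using LA by (simp add: list_all2_lengthD)
  have ctr: "C \<in> Ctr (concat dss) D"
  proof -
    obtain k where k: "k < length \<Delta>" "\<Delta>!k = DGen C psC D fsC" using genC by (auto simp: in_set_conv_nth)
    have "tdef tr \<Delta> \<Gamma> (\<Delta>!k) (dss!k)" using LA k(1) by (simp add: list_all2_nthD)
    then have "dss!k = [DCtor C psC D]" using k(2) tr by simp
    moreover have "dss!k \<in> set dss" using k(1) len by simp
    ultimately have "DCtor C psC D \<in> set (concat dss)" by force
    then show ?thesis unfolding Ctr_def by auto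
  qed
  have gens_C: "ps0 = psC \<and> find_fun f fsC = Some fd0"
    if mem: "(C, ps0, fd0) \<in> set (gens_with \<Delta> D f)" for ps0 fd0
  proof -
    obtain fs0 where fs0: "DGen C ps0 D fs0 \<in> set \<Delta>" "find_fun f fs0 = Some fd0"
      using mem unfolding gens_with_set by blast
    have "DGen C ps0 D fs0 = DGen C psC D fsC" using wf_uniq[OF wf fs0(1) genC, of C] by simp
    then show ?thesis using fs0 by simp
  qed
  have cl: "\<exists>g\<in>set (gens_with \<Delta> D f). fun2case tr \<Delta> \<Gamma> D f xs0 T0 g x"
    if H: "list_all2 (fun2case tr \<Delta> \<Gamma> D f xs0 T0) (gens_with \<Delta> D f) gcls" "x \<in> set gcls"
    for gcls xs0 T0 x
  proof -
    obtain i where i: "i < length gcls" "gcls!i = x" using H(2) by (auto simp: in_set_conv_nth)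
    have "i < length (gens_with \<Delta> D f)" using H(1) i(1) by (simp add: list_all2_lengthD)
    moreover have "fun2case tr \<Delta> \<Gamma> D f xs0 T0 (gens_with \<Delta> D f ! i) (gcls!i)"
      using H(1) calculation by (simp add: list_all2_nthD)
    ultimately show ?thesis using i(2) nth_mem by blast
  qed
  have cl2: "\<exists>C0 ps0 fd0 e3 e4. (C0, ps0, fd0) \<in> set (gens_with \<Delta> D f) \<and> snd (snd (snd fd0)) = e3 \<and>
              texp tr \<Delta> (ext (ext (\<Gamma>(thisv \<mapsto> D)) ps0) xs0) e3 T0 e4 \<and>
              x = (PCon C0 (map fst ps0), subst_var thisv selfv e4)"
    if H: "list_all2 (fun2case tr \<Delta> \<Gamma> D f xs0 T0) (gens_with \<Delta> D f) gcls" "x \<in> set gcls"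
    for gcls xs0 T0 x
  proof -
    obtain g where g: "g \<in> set (gens_with \<Delta> D f)" "fun2case tr \<Delta> \<Gamma> D f xs0 T0 g x"
      using cl[OF H] by blast
    obtain C0 ps0 f3 xs3 T3 e3 where g0: "g = (C0, ps0, (f3, xs3, T3, e3))" by (cases g) auto
    from g(2) obtain e4 where e4: "texp tr \<Delta> (ext (ext (\<Gamma>(thisv \<mapsto> D)) ps0) xs0) e3 T0 e4"
      "x = (PCon C0 (map fst ps0), subst_var thisv selfv e4)" unfolding g0 fun2case_def by auto
    show ?thesis using g(1) e4 unfolding g0
      by (intro exI[where x=C0] exI[where x=ps0] exI[where x="(f3,xs3,T3,e3)"] exI[where x=e3]
          exI[where x=e4]) simp
  qed
  show ?thesis
  proof (cases "find_fun f fsC")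
    case (Some fd)
    obtain f1 xs2 T2 eb where fd: "fd = (f1, xs2, T2, eb)" by (cases fd) auto
    from body have bodyeq: "ys = map fst psC" "xs = map fst xs2" "e = eb"
      using fg Some fd unfolding dtrBody_def by auto
    obtain dtrs d where ifc: "DIface D dtrs \<in> set \<Delta>" "d \<in> set dtrs" "dtr_name d = f"
      using dt unfolding Dtr_def by auto
    from csm_of_dtr[OF wf LA tr ifc] obtain gcls wcl where
      fc: "find_csm (concat dss) f = Some (D, dtr_params d, dtr_ret d, gcls @ wcl)" and
      la: "list_all2 (fun2case tr \<Delta> \<Gamma> D f (dtr_params d) (dtr_ret d)) (gens_with \<Delta> D f) gcls" and
      wc: "case d of DtrDecl _ _ _ \<Rightarrow> wcl = []
      | DtrDef _ xs T e0 \<Rightarrow> (\<exists>e0'. texp tr \<Delta> (ext (\<Gamma>(thisv \<mapsto> D)) xs) e0 T e0' \<and>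
                                    wcl = [(PWild, subst_var thisv selfv e0')])" by blast
    have wcl_np: "\<forall>x\<in>set wcl. fst x = PWild" using wc by (cases d) auto
    have inG: "(C, psC, fd) \<in> set (gens_with \<Delta> D f)" using genC Some by (auto simp: gens_with_set)
    then obtain i where i: "i < length (gens_with \<Delta> D f)" "gens_with \<Delta> D f ! i = (C, psC, fd)"
      by (auto simp: in_set_conv_nth)
    have il: "i < length gcls" using la i(1) by (simp add: list_all2_lengthD)
    have "fun2case tr \<Delta> \<Gamma> D f (dtr_params d) (dtr_ret d) (gens_with \<Delta> D f ! i) (gcls!i)"
      using la i(1) by (simp add: list_all2_nthD)
    then obtain e'' where e'': "xs2 = dtr_params d"
      "texp tr \<Delta> (ext (ext (\<Gamma>(thisv \<mapsto> D)) psC) (dtr_params d)) eb (dtr_ret d) e''"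
      "gcls!i = (PCon C (map fst psC), subst_var thisv selfv e'')"
      unfolding i(2) fun2case_def fd by auto
    have "e' = e''" using texp_det[OF te wf] e''(2) bodyeq(3) by simp
    define v where "v = (PCon C (map fst psC), subst_var thisv selfv e')"
    have fcc: "find_con_clause C (gcls @ wcl) = Some v"
      unfolding find_con_clause_def
    proof (rule find_I)
      show "v \<in> set (gcls @ wcl)" using e''(3) il nth_mem \<open>e' = e''\<close> v_def by fastforce
      show "(\<lambda>(p, _). is_pcon C p) v" by (simp add: v_def)
      show "\<forall>x\<in>set (gcls @ wcl). (\<lambda>(p,_). is_pcon C p) x \<longrightarrow> x = v"
      proof (intro ballI impI)
        fix x assume x: "x \<in> set (gcls @ wcl)" and px: "(\<lambda>(p,_). is_pcon C p) x"
        have "x \<notin> set wcl"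
        proof
          assume "x \<in> set wcl"
          then have "fst x = PWild" using wcl_np by blast
          then show False using px by (cases x) simp
        qed
        then have "x \<in> set gcls" using x by simp
        then obtain C0 ps0 fd0 e3 e4 where g: "(C0, ps0, fd0) \<in> set (gens_with \<Delta> D f)"
          "snd (snd (snd fd0)) = e3" "texp tr \<Delta> (ext (ext (\<Gamma>(thisv \<mapsto> D)) ps0) (dtr_params d)) e3 (dtr_ret d) e4"
          "x = (PCon C0 (map fst ps0), subst_var thisv selfv e4)"
          using cl2[OF la] by blast
        have "C0 = C" using px g(4) by simp
        then have "ps0 = psC \<and> find_fun f fsC = Some fd0" using gens_C g(1) by simp
        then have "ps0 = psC" "e3 = eb" using Some fd g(2) by auto
        then have "e4 = e'" using texp_det[OF te wf] g(3) bodyeq(3) by simp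
        then show "x = v" using g(4) \<open>C0 = C\<close> \<open>ps0 = psC\<close> v_def by simp
      qed
    qed
    have "csmBody (concat dss) f C = Some (map fst psC, map fst (dtr_params d), subst_var thisv selfv e')"
      unfolding csmBody_def using fc fcc v_def by simp
    moreover have "f \<in> Csm (concat dss) D" using find_csm_D[OF fc] unfolding Csm_def by auto
    ultimately show ?thesis using ctr bodyeq e''(1) by simp
  next
    case None
    obtain dtrs0 where fi: "find_iface \<Delta> D = Some dtrs0"
      using body fg None unfolding dtrBody_def by (auto split: option.splits)
    obtain f0 xs0 T0 e0 where fd: "find (\<lambda>d. dtr_name d = f) dtrs0 = Some (DtrDef f0 xs0 T0 e0)"
      and bodyeq: "ys = []" "xs = map fst xs0" "e = e0"
      using body fg None fi unfolding dtrBody_def by (auto split: option.splits dtr.splits)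
    define d where "d = DtrDef f0 xs0 T0 e0"
    have ifc: "DIface D dtrs0 \<in> set \<Delta>" "d \<in> set dtrs0" "dtr_name d = f"
    proof -
      show "DIface D dtrs0 \<in> set \<Delta>" using find_iface_D[OF fi] .
      obtain i where "i < length dtrs0" "dtr_name (dtrs0!i) = f" "DtrDef f0 xs0 T0 e0 = dtrs0!i"
        using fd unfolding find_Some_iff by blast
      then show "d \<in> set dtrs0" "dtr_name d = f" unfolding d_def by (metis nth_mem)+
    qed
    from csm_of_dtr[OF wf LA tr ifc] obtain gcls wcl where
      fc: "find_csm (concat dss) f = Some (D, dtr_params d, dtr_ret d, gcls @ wcl)" and
      la: "list_all2 (fun2case tr \<Delta> \<Gamma> D f (dtr_params d) (dtr_ret d)) (gens_with \<Delta> D f) gcls" and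
      wc: "case d of DtrDecl _ _ _ \<Rightarrow> wcl = []
      | DtrDef _ xs T e0 \<Rightarrow> (\<exists>e0'. texp tr \<Delta> (ext (\<Gamma>(thisv \<mapsto> D)) xs) e0 T e0' \<and>
                                    wcl = [(PWild, subst_var thisv selfv e0')])" by blast
    obtain e0' where e0': "texp tr \<Delta> (ext (\<Gamma>(thisv \<mapsto> D)) xs0) e0 T0 e0'"
      "wcl = [(PWild, subst_var thisv selfv e0')]" using wc unfolding d_def by auto
    have "e' = e0'" using texp_det[OF te wf] e0'(1) bodyeq(3) by simp
    have gc: "\<exists>C0 ys0 b. x = (PCon C0 ys0, b) \<and> C0 \<noteq> C" if xg: "x \<in> set gcls" for x
    proof -
      obtain C0 ps0 fd0 e3 e4 where g: "(C0, ps0, fd0) \<in> set (gens_with \<Delta> D f)"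
        "x = (PCon C0 (map fst ps0), subst_var thisv selfv e4)"
        using cl2[OF la xg] by blast
      have "C0 \<noteq> C"
      proof
        assume "C0 = C"
        then have "find_fun f fsC = Some fd0" using gens_C g(1) by blast
        then show False using None by simp
      qed
      then show ?thesis using g(2) by blast
    qed
    have fcc: "find_con_clause C (gcls @ wcl) = None"
      unfolding find_con_clause_def find_None_iff using gc e0'(2) by fastforce
    have fwc: "find_wild_clause (gcls @ wcl) = Some (PWild, subst_var thisv selfv e0')"
    proof -
      have "\<forall>x\<in>set gcls. \<not> (\<lambda>(p, _). p = PWild) x" using gc by fastforce
      then have "find (\<lambda>(p, _). p = PWild) (gcls @ wcl) = find (\<lambda>(p, _). p = PWild) wcl"
        by (rule find_append_skip)
      then show ?thesis unfolding find_wild_clause_def using e0'(2) by simp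
    qed
    have "csmBody (concat dss) f C = Some ([], map fst xs0, subst_var thisv selfv e0')"
      unfolding csmBody_def using fc fcc fwc d_def by simp
    moreover have "f \<in> Csm (concat dss) D" using find_csm_D[OF fc] unfolding Csm_def by auto
    ultimately show ?thesis using ctr bodyeq \<open>e' = e0'\<close> by simp
  qed
qed


theorem lemmaB6:
  assumes "tprog tr \<Gamma> P T0 P'"
    and "D \<in> tr"
    and "C \<in> Gen (defs P) D"
    and "f \<in> Dtr (defs P) D"
    and "dtrBody (defs P) f C = Some (ys, xs, e)"
    and "texp tr (defs P) \<Gamma> e T e'"
  shows "C \<in> Ctr (defs P') D \<and> f \<in> Csm (defs P') D \<and>
         csmBody (defs P') f C = Some (ys, xs, subst_var thisv selfv e')"
proof -
  obtain dss where wf: "wf_gctx (defs P)" and LA: "list_all2 (tdef tr (defs P) \<Gamma>) (defs P) dss"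
    and eq: "defs P' = concat dss"
    using assms(1) unfolding tprog_def by blast
  show ?thesis unfolding eq by (rule main[OF wf LA assms(2-6)])
qed

end
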